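(* Let $\nu,a,b\in\mathbb{R}$ with $0<b+\nu<(a+\nu)/4$. Let $u^*$ be the unique solution in $b<u<a$ of $\lambda_2(a,u,b)=\lambda_3(a,u,b)$, and put $\alpha=\lambda_2(a,u^*,b)$. Then the equation $x/t=\lambda_2(a,u_2,b)$ can be inverted to give $u_2\in[u^*,a]$ as an increasing function of $x/t$ on the interval $\alpha\le x/t\le 2a+b+2\nu$.
   Context: For $-\nu<u_3<u_2<u_1$ define $$I(u_1,u_2,u_3)=\int_{u_3}^{u_2}\frac{\eta+\nu}{\sqrt{(\eta+\nu)(u_1-\eta)(u_2-\eta)(\eta-u_3)}}\,d\eta,$$ and for $i=1,2,3$ $$\lambda_i=u_1+u_2+u_3+2\nu-\frac{I}{\partial I/\partial u_i}.$$ These functions extend continuously to $u_1=u_2>u_3$, where $\lambda_2=2u_1+u_3+2\nu$. *)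

theory Defs
  imports "HOL-Analysis.Analysis"
begin

text \<open>The integral I(u1,u2,u3) (depending on the parameter nu), as a
  (Henstock-Kurzweil, hence improper-Riemann-compatible) integral over [u3,u2].\<close>
definition Ifun :: "real \<Rightarrow> real \<Rightarrow> real \<Rightarrow> real \<Rightarrow> real" where
  "Ifun \<nu> u1 u2 u3 =
     integral {u3..u2}
       (\<lambda>\<eta>. (\<eta> + \<nu>) / sqrt ((\<eta> + \<nu>) * (u1 - \<eta>) * (u2 - \<eta>) * (\<eta> - u3)))"

text \<open>lambda_2, including its continuous extension to u1 = u2.\<close>
definition lam2 :: "real \<Rightarrow> real \<Rightarrow> real \<Rightarrow> real \<Rightarrow> real" where
  "lam2 \<nu> u1 u2 u3 =
     (if u1 = u2 then 2 * u1 + u3 + 2 * \<nu>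
      else u1 + u2 + u3 + 2 * \<nu> - Ifun \<nu> u1 u2 u3 / deriv (\<lambda>s. Ifun \<nu> u1 s u3) u2)"

definition lam3 :: "real \<Rightarrow> real \<Rightarrow> real \<Rightarrow> real \<Rightarrow> real" where
  "lam3 \<nu> u1 u2 u3 =
     u1 + u2 + u3 + 2 * \<nu> - Ifun \<nu> u1 u2 u3 / deriv (\<lambda>s. Ifun \<nu> u1 u2 s) u3"

end

theory Submission
  imports Defs
begin

definition fF :: "real \<Rightarrow> real \<Rightarrow> real \<Rightarrow> real" where
  "fF \<nu> a e = 2 * sqrt (e + \<nu>) / sqrt (a - e)"
definition f1 :: "real \<Rightarrow> real \<Rightarrow> real \<Rightarrow> real" where
  "f1 \<nu> a e = (a + \<nu>) / (sqrt (e + \<nu>) * ((a - e) * sqrt (a - e)))"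
definition f2 :: "real \<Rightarrow> real \<Rightarrow> real \<Rightarrow> real" where
  "f2 \<nu> a e = (a + \<nu>) * (4 * (e + \<nu>) - (a + \<nu>)) /
      (2 * ((e + \<nu>) * sqrt (e + \<nu>)) * ((a - e)\<^sup>2 * sqrt (a - e)))"

lemma fF_deriv:
  assumes "-\<nu> < e" "e < a"
  shows "(fF \<nu> a has_real_derivative f1 \<nu> a e) (at e)"
proof -
  have p: "e + \<nu> > 0" and q: "a - e > 0" using assms by auto
  have "((\<lambda>e. 2 * sqrt (e + \<nu>) / sqrt (a - e)) has_real_derivative
     (2 * (inverse (sqrt (e + \<nu>)) / 2) * sqrt (a - e) - 2 * sqrt (e + \<nu>) * (- (inverse (sqrt (a - e)) / 2)))
        / (sqrt (a - e) * sqrt (a - e))) (at e)"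
    using p q
    by (auto intro!: derivative_eq_intros)
  moreover have "(2 * (inverse (sqrt (e + \<nu>)) / 2) * sqrt (a - e) - 2 * sqrt (e + \<nu>) * (- (inverse (sqrt (a - e)) / 2)))
        / (sqrt (a - e) * sqrt (a - e)) = f1 \<nu> a e"
  proof -
    have s1: "sqrt (e+\<nu>) * sqrt (e+\<nu>) = e + \<nu>" using p by simp
    have s2: "sqrt (a-e) * sqrt (a-e) = a - e" using q by simp
    have "sqrt (e+\<nu>) > 0" "sqrt (a-e) > 0" using p q by auto
    then show ?thesis unfolding f1_def using s1 s2
      by (simp add: field_simps)
  qed
  ultimately show ?thesis unfolding fF_def[abs_def] by simp
qed

lemma f1_deriv:
  assumes "-\<nu> < e" "e < a"
  shows "(f1 \<nu> a has_real_derivative f2 \<nu> a e) (at e)"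
proof -
  have p: "e + \<nu> > 0" and q: "a - e > 0" using assms by auto
  have "((\<lambda>e. (a + \<nu>) / (sqrt (e + \<nu>) * ((a - e) * sqrt (a - e)))) has_real_derivative
     - ((a + \<nu>) * ((inverse (sqrt (e + \<nu>)) / 2) * ((a - e) * sqrt (a - e)) + sqrt (e + \<nu>) * (- sqrt (a - e) + (a - e) * (- (inverse (sqrt (a - e)) / 2)))))
        / ((sqrt (e + \<nu>) * ((a - e) * sqrt (a - e)))^2)) (at e)"
    using p q
    by (auto intro!: derivative_eq_intros simp: power2_eq_square)
  moreover have "- ((a + \<nu>) * ((inverse (sqrt (e + \<nu>)) / 2) * ((a - e) * sqrt (a - e)) + sqrt (e + \<nu>) * (- sqrt (a - e) + (a - e) * (- (inverse (sqrt (a - e)) / 2)))))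
        / ((sqrt (e + \<nu>) * ((a - e) * sqrt (a - e)))^2) = f2 \<nu> a e"
  proof -
    obtain r s where r: "r = sqrt (e+\<nu>)" and s: "s = sqrt (a - e)" by auto
    have rp: "r > 0" "s > 0" using p q r s by auto
    have e1: "e + \<nu> = r^2" "a - e = s^2" using p q r s by auto
    have A: "a + \<nu> = r^2 + s^2" using e1 by linarith
    show ?thesis unfolding f2_def r[symmetric] s[symmetric] e1 A using rp
      by (simp add: field_simps) algebra
  qed
  ultimately show ?thesis unfolding f1_def[abs_def] by simp
qed

definition eta :: "real \<Rightarrow> real \<Rightarrow> real \<Rightarrow> real" where
  "eta w u t = w + (u - w) * (sin t)\<^sup>2"

lemma conv_between:
  fixes x w u :: real
  assumes "0 \<le> x" "x \<le> 1"
  shows "min w u \<le> w + (u - w) * x \<and> w + (u - w) * x \<le> max w u"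
proof -
  have e: "w + (u - w) * x = u - (u - w) * (1 - x)" by algebra
  show ?thesis
  proof (cases "w \<le> u")
    case True
    have "(u - w) * x \<ge> 0" "(u - w) * (1 - x) \<ge> 0" using True assms by auto
    then show ?thesis using True e by (auto simp: min_def max_def)
  next
    case False
    have "(w - u) * x \<ge> 0" "(w - u) * (1 - x) \<ge> 0" using False assms by auto
    then show ?thesis using False e by (auto simp: min_def max_def algebra_simps)
  qed
qed

lemma sin2_bounds: "0 \<le> (sin t)\<^sup>2" "(sin t)\<^sup>2 \<le> (1::real)"
  using abs_sin_le_one[of t] by (auto simp: abs_square_le_1)

lemma eta_between: "min w u \<le> eta w u t \<and> eta w u t \<le> max w u"
  unfolding eta_def using conv_between[OF sin2_bounds] by blast

lemma eta_in:
  assumes "-\<nu> < w" "w < a" "-\<nu> < u" "u < a"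
  shows "-\<nu> < eta w u t \<and> eta w u t < a"
  using eta_between[of w u t] assms by auto

lemma cont_f1: "continuous_on {-\<nu><..<a} (f1 \<nu> a)"
  unfolding f1_def[abs_def] by (intro continuous_intros) auto
lemma cont_f2: "continuous_on {-\<nu><..<a} (f2 \<nu> a)"
  unfolding f2_def[abs_def] by (intro continuous_intros) auto
lemma cont_fF: "continuous_on {-\<nu><..<a} (fF \<nu> a)"
  unfolding fF_def[abs_def] by (intro continuous_intros) auto

lemma cont_eta_f:
  fixes T :: "real set"
  assumes cf: "continuous_on {-\<nu><..<a} f" and w: "-\<nu> < w" "w < a"
    and cg: "continuous_on UNIV (g::real\<Rightarrow>real)"
  shows "continuous_on ({-\<nu><..<a} \<times> T) (\<lambda>(u, t). f (eta w u t) * g t)"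
    and "continuous_on ({-\<nu><..<a} \<times> T) (\<lambda>(x, t). f (eta x w t) * g t)"
proof -
  have c1: "continuous_on ({-\<nu><..<a} \<times> T) (\<lambda>x. eta w (fst x) (snd x))"
    by (auto simp: eta_def intro!: continuous_intros)
  have img: "(\<lambda>x. eta w (fst x) (snd x)) ` ({-\<nu><..<a} \<times> T) \<subseteq> {-\<nu><..<a}"
    using eta_in w by fastforce
  have c2: "continuous_on ({-\<nu><..<a} \<times> T) (\<lambda>x. g (snd x))"
    by (rule continuous_on_compose2[OF cg]) (auto intro!: continuous_intros)
  show "continuous_on ({-\<nu><..<a} \<times> T) (\<lambda>(u, t). f (eta w u t) * g t)"
    unfolding split_beta
    by (rule continuous_on_mult[OF continuous_on_compose2[OF cf c1 img] c2])
  have c1: "continuous_on ({-\<nu><..<a} \<times> T) (\<lambda>x. eta (fst x) w (snd x))"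
    by (auto simp: eta_def intro!: continuous_intros)
  have img: "(\<lambda>x. eta (fst x) w (snd x)) ` ({-\<nu><..<a} \<times> T) \<subseteq> {-\<nu><..<a}"
    using eta_in w by fastforce
  show "continuous_on ({-\<nu><..<a} \<times> T) (\<lambda>(x, t). f (eta x w t) * g t)"
    unfolding split_beta
    by (rule continuous_on_mult[OF continuous_on_compose2[OF cf c1 img] c2])
qed

lemma leib_u:
  assumes fd: "\<And>e. -\<nu> < e \<Longrightarrow> e < a \<Longrightarrow> (f has_real_derivative f' e) (at e)"
    and cf': "continuous_on {-\<nu><..<a} f'"
    and w: "-\<nu> < w" "w < a" and x0: "-\<nu> < x0" "x0 < a"
    and cg: "continuous_on UNIV (g::real\<Rightarrow>real)"
  shows "((\<lambda>x. integral {0..pi/2} (\<lambda>t. f (eta w x t) * g t)) has_field_derivative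
          integral {0..pi/2} (\<lambda>t. f' (eta w x0 t) * ((sin t)\<^sup>2 * g t))) (at x0)"
proof -
  have cf: "continuous_on {-\<nu><..<a} f"
    by (rule DERIV_continuous_on, rule has_field_derivative_at_within, rule fd) auto
  have "((\<lambda>x. integral (cbox 0 (pi/2)) (\<lambda>t. f (eta w x t) * g t)) has_field_derivative
          integral (cbox 0 (pi/2)) (\<lambda>t. f' (eta w x0 t) * ((sin t)\<^sup>2 * g t))) (at x0 within {-\<nu><..<a})"
  proof (rule leibniz_rule_field_derivative[where fx="\<lambda>x t. f' (eta w x t) * ((sin t)\<^sup>2 * g t)"])
    fix x t assume x: "x \<in> {-\<nu><..<a}" and t: "t \<in> cbox 0 (pi/2)"
    have e: "-\<nu> < eta w x t" "eta w x t < a" using eta_in[of \<nu> w a x t] w x by auto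
    have d1: "((\<lambda>x. eta w x t) has_real_derivative (sin t)\<^sup>2) (at x)"
      unfolding eta_def by (auto intro!: derivative_eq_intros)
    have "((\<lambda>x. f (eta w x t) * g t) has_real_derivative f' (eta w x t) * (sin t)\<^sup>2 * g t) (at x)"
      by (intro DERIV_cmult_right DERIV_chain2[OF fd d1] e)
    then show "((\<lambda>x. f (eta w x t) * g t) has_real_derivative f' (eta w x t) * ((sin t)\<^sup>2 * g t)) (at x within {-\<nu><..<a})"
      by (simp add: mult.assoc has_field_derivative_at_within)
  next
    fix x assume x: "x \<in> {-\<nu><..<a}"
    have ce: "continuous_on (cbox 0 (pi/2)) (\<lambda>t. eta w x t)"
      unfolding eta_def by (intro continuous_intros)
    have im: "(\<lambda>t. eta w x t) ` cbox 0 (pi/2) \<subseteq> {-\<nu><..<a}"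
      using eta_in[of \<nu> w a x] w x by auto
    have "continuous_on (cbox 0 (pi/2)) (\<lambda>t. f (eta w x t) * g t)"
      by (rule continuous_on_mult[OF continuous_on_compose2[OF cf ce im]
          continuous_on_subset[OF cg]]) auto
    then show "(\<lambda>t. f (eta w x t) * g t) integrable_on cbox 0 (pi/2)"
      by (rule integrable_continuous)
  next
    have cg2: "continuous_on UNIV (\<lambda>t. (sin t)\<^sup>2 * g t)"
      by (rule continuous_on_mult[OF _ cg]) (intro continuous_intros)
    show "continuous_on ({-\<nu><..<a} \<times> cbox 0 (pi/2)) (\<lambda>(x, t). f' (eta w x t) * ((sin t)\<^sup>2 * g t))"
      by (rule cont_eta_f(1)[OF cf' w cg2])
  qed (use x0 in auto)
  then show ?thesis using x0 by (simp add: at_within_open[of x0 "{-\<nu><..<a}"] cbox_interval)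
qed

lemma leib_w:
  assumes fd: "\<And>e. -\<nu> < e \<Longrightarrow> e < a \<Longrightarrow> (f has_real_derivative f' e) (at e)"
    and cf': "continuous_on {-\<nu><..<a} f'"
    and w: "-\<nu> < w" "w < a" and x0: "-\<nu> < x0" "x0 < a"
    and cg: "continuous_on UNIV (g::real\<Rightarrow>real)"
  shows "((\<lambda>x. integral {0..pi/2} (\<lambda>t. f (eta x w t) * g t)) has_field_derivative
          integral {0..pi/2} (\<lambda>t. f' (eta x0 w t) * ((cos t)\<^sup>2 * g t))) (at x0)"
proof -
  have cf: "continuous_on {-\<nu><..<a} f"
    by (rule DERIV_continuous_on, rule has_field_derivative_at_within, rule fd) auto
  have "((\<lambda>x. integral (cbox 0 (pi/2)) (\<lambda>t. f (eta x w t) * g t)) has_field_derivative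
          integral (cbox 0 (pi/2)) (\<lambda>t. f' (eta x0 w t) * ((cos t)\<^sup>2 * g t))) (at x0 within {-\<nu><..<a})"
  proof (rule leibniz_rule_field_derivative[where fx="\<lambda>x t. f' (eta x w t) * ((cos t)\<^sup>2 * g t)"])
    fix x t assume x: "x \<in> {-\<nu><..<a}" and t: "t \<in> cbox 0 (pi/2)"
    have e: "-\<nu> < eta x w t" "eta x w t < a" using eta_in[of \<nu> x a w t] w x by auto
    have d1: "((\<lambda>x. eta x w t) has_real_derivative (cos t)\<^sup>2) (at x)"
      unfolding eta_def by (auto intro!: derivative_eq_intros simp: cos_squared_eq)
    have "((\<lambda>x. f (eta x w t) * g t) has_real_derivative f' (eta x w t) * (cos t)\<^sup>2 * g t) (at x)"
      by (intro DERIV_cmult_right DERIV_chain2[OF fd d1] e)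
    then show "((\<lambda>x. f (eta x w t) * g t) has_real_derivative f' (eta x w t) * ((cos t)\<^sup>2 * g t)) (at x within {-\<nu><..<a})"
      by (simp add: mult.assoc has_field_derivative_at_within)
  next
    fix x assume x: "x \<in> {-\<nu><..<a}"
    have ce: "continuous_on (cbox 0 (pi/2)) (\<lambda>t. eta x w t)"
      unfolding eta_def by (intro continuous_intros)
    have im: "(\<lambda>t. eta x w t) ` cbox 0 (pi/2) \<subseteq> {-\<nu><..<a}"
      using eta_in[of \<nu> x a w] w x by auto
    have "continuous_on (cbox 0 (pi/2)) (\<lambda>t. f (eta x w t) * g t)"
      by (rule continuous_on_mult[OF continuous_on_compose2[OF cf ce im]
          continuous_on_subset[OF cg]]) auto
    then show "(\<lambda>t. f (eta x w t) * g t) integrable_on cbox 0 (pi/2)"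
      by (rule integrable_continuous)
  next
    have cg2: "continuous_on UNIV (\<lambda>t. (cos t)\<^sup>2 * g t)"
      by (rule continuous_on_mult[OF _ cg]) (intro continuous_intros)
    show "continuous_on ({-\<nu><..<a} \<times> cbox 0 (pi/2)) (\<lambda>(x, t). f' (eta x w t) * ((cos t)\<^sup>2 * g t))"
      by (rule cont_eta_f(2)[OF cf' w cg2])
  qed (use x0 in auto)
  then show ?thesis using x0 by (simp add: at_within_open[of x0 "{-\<nu><..<a}"] cbox_interval)
qed

definition JJ where "JJ \<nu> a w u = integral {0..pi/2} (\<lambda>t. fF \<nu> a (eta w u t))"
definition Ju where "Ju \<nu> a w u = integral {0..pi/2} (\<lambda>t. f1 \<nu> a (eta w u t) * (sin t)\<^sup>2)"
definition Jw where "Jw \<nu> a w u = integral {0..pi/2} (\<lambda>t. f1 \<nu> a (eta w u t) * (cos t)\<^sup>2)"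
definition Juu where "Juu \<nu> a w u = integral {0..pi/2} (\<lambda>t. f2 \<nu> a (eta w u t) * ((sin t)\<^sup>2 * (sin t)\<^sup>2))"
definition Jwu where "Jwu \<nu> a w u = integral {0..pi/2} (\<lambda>t. f2 \<nu> a (eta w u t) * ((sin t)\<^sup>2 * (cos t)\<^sup>2))"

lemma JJ_du:
  assumes "-\<nu> < w" "w < a" "-\<nu> < u" "u < a"
  shows "((\<lambda>u. JJ \<nu> a w u) has_field_derivative Ju \<nu> a w u) (at u)"
  using leib_u[of \<nu> a "fF \<nu> a" "f1 \<nu> a" w u "\<lambda>t. 1", OF fF_deriv cont_f1 assms]
  by (simp add: JJ_def Ju_def)

lemma JJ_dw:
  assumes "-\<nu> < w" "w < a" "-\<nu> < u" "u < a"
  shows "((\<lambda>w. JJ \<nu> a w u) has_field_derivative Jw \<nu> a w u) (at w)"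
  using leib_w[of \<nu> a "fF \<nu> a" "f1 \<nu> a" u w "\<lambda>t. 1", OF fF_deriv cont_f1 assms(3,4,1,2)]
  by (simp add: JJ_def Jw_def)

lemma Ju_du:
  assumes "-\<nu> < w" "w < a" "-\<nu> < u" "u < a"
  shows "((\<lambda>u. Ju \<nu> a w u) has_field_derivative Juu \<nu> a w u) (at u)"
  using leib_u[of \<nu> a "f1 \<nu> a" "f2 \<nu> a" w u "\<lambda>t. (sin t)\<^sup>2", OF f1_deriv cont_f2 assms]
  by (simp add: Ju_def Juu_def continuous_intros)

lemma Jw_du:
  assumes "-\<nu> < w" "w < a" "-\<nu> < u" "u < a"
  shows "((\<lambda>u. Jw \<nu> a w u) has_field_derivative Jwu \<nu> a w u) (at u)"
  using leib_u[of \<nu> a "f1 \<nu> a" "f2 \<nu> a" w u "\<lambda>t. (cos t)\<^sup>2", OF f1_deriv cont_f2 assms]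
  by (simp add: Jw_def Jwu_def continuous_intros)

lemma subst_pt:
  assumes "-\<nu> < w" "w < u" "u < a" "0 < t" "t < pi/2"
  shows "(eta w u t + \<nu>) / sqrt ((eta w u t + \<nu>) * (a - eta w u t) * (u - eta w u t) * (eta w u t - w))
          * ((u - w) * (2 * sin t * cos t)) = fF \<nu> a (eta w u t)"
proof -
  define e where "e = eta w u t"
  have sp: "sin t > 0" using assms by (intro sin_gt_zero) auto
  have cp: "cos t > 0" using assms by (intro cos_gt_zero) auto
  have e1: "u - e = (u - w) * (cos t)\<^sup>2" unfolding e_def eta_def cos_squared_eq by algebra
  have e2: "e - w = (u - w) * (sin t)\<^sup>2" unfolding e_def eta_def by algebra
  have ein: "-\<nu> < e" "e < a" using eta_in[of \<nu> w a u t] assms unfolding e_def by auto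
  define Y where "Y = (u - w) * sin t * cos t"
  have Yp: "Y > 0" unfolding Y_def using sp cp assms by auto
  have "(e + \<nu>) * (a - e) * (u - e) * (e - w) = ((e + \<nu>) * (a - e)) * Y\<^sup>2"
    unfolding e1 e2 Y_def by (simp add: power2_eq_square algebra_simps)
  then have "sqrt ((e + \<nu>) * (a - e) * (u - e) * (e - w)) = sqrt ((e + \<nu>) * (a - e)) * Y"
    using Yp by (simp only: real_sqrt_mult real_sqrt_abs)
  then have sq: "sqrt ((e + \<nu>) * (a - e) * (u - e) * (e - w)) = sqrt (e + \<nu>) * sqrt (a - e) * ((u - w) * sin t * cos t)"
    unfolding Y_def by (simp add: real_sqrt_mult)
  have P: "sqrt (e + \<nu>) > 0" "sqrt (a - e) > 0" using ein by auto
  have PP: "e + \<nu> = sqrt (e + \<nu>) * sqrt (e + \<nu>)" using ein by simp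
  show ?thesis unfolding e_def[symmetric] sq fF_def
    using P sp cp assms by (subst (1) PP) (simp add: field_simps)
qed

lemma Ifun_JJ:
  assumes wn: "-\<nu> < w" and wu: "w < u" and ua: "u < a"
  shows "Ifun \<nu> a u w = JJ \<nu> a w u"
proof -
  define h where "h = (\<lambda>e. (e + \<nu>) / sqrt ((e + \<nu>) * (a - e) * (u - e) * (e - w)))"
  define F where "F = (\<lambda>t. fF \<nu> a (eta w u t))"
  define g' where "g' = (\<lambda>t::real. (u - w) * (2 * sin t * cos t))"
  have ce: "continuous_on {0..pi/2} (\<lambda>t. eta w u t)"
    unfolding eta_def by (intro continuous_intros)
  have im: "(\<lambda>t. eta w u t) ` {0..pi/2} \<subseteq> {-\<nu><..<a}"
    using eta_in[of \<nu> w a u] wn wu ua by auto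
  have cF: "continuous_on {0..pi/2} F"
    unfolding F_def by (rule continuous_on_compose2[OF cont_fF ce im])
  have JF: "(F has_integral JJ \<nu> a w u) {0..pi/2}"
    unfolding JJ_def F_def[symmetric] using cF
    by (intro integrable_integral integrable_continuous_interval)
  have F0: "0 \<le> F t" if "t \<in> {0..pi/2}" for t
  proof -
    have "-\<nu> < eta w u t \<and> eta w u t < a" using eta_in[of \<nu> w a u t] wn wu ua by auto
    then show ?thesis unfolding F_def fF_def by auto
  qed
  have JJ0: "0 \<le> JJ \<nu> a w u" using has_integral_nonneg[OF JF F0] by auto
  have N1: "integral\<^sup>N lborel (\<lambda>x. ennreal (F x) * indicator {0..pi/2} x) = ennreal (JJ \<nu> a w u)"
    by (rule nn_integral_has_integral_lebesgue'[OF F0 JF])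
  have Mh: "h \<in> borel_measurable borel" unfolding h_def by measurable
  have dg: "\<And>x. x \<in> {0..pi/2} \<Longrightarrow> (eta w u has_real_derivative g' x) (at x)"
    unfolding eta_def[abs_def] g'_def
    by (auto intro!: derivative_eq_intros simp: power2_eq_square)
  have cg': "continuous_on {0..pi/2} g'" unfolding g'_def by (intro continuous_intros)
  have g'0: "\<And>x. x \<in> {0..pi/2} \<Longrightarrow> 0 \<le> g' x"
    unfolding g'_def using wu by (auto intro!: mult_nonneg_nonneg sin_ge_zero cos_ge_zero)
  have e0: "eta w u 0 = w" and e1: "eta w u (pi/2) = u" by (auto simp: eta_def)
  have sub: "(\<integral>\<^sup>+x. h x * indicator {eta w u 0..eta w u (pi/2)} x \<partial>lborel) =
      (\<integral>\<^sup>+x. h (eta w u x) * g' x * indicator {0..pi/2} x \<partial>lborel)"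
    by (rule nn_integral_substitution[OF _ dg cg' g'0]) (use Mh in \<open>auto simp: set_borel_measurable_def\<close>)
  have "(\<integral>\<^sup>+x. h (eta w u x) * g' x * indicator {0..pi/2} x \<partial>lborel) =
        (\<integral>\<^sup>+x. ennreal (F x) * indicator {0..pi/2} x \<partial>lborel)"
  proof (rule nn_integral_cong_AE)
    show "AE x in lborel. ennreal (h (eta w u x) * g' x * indicator {0..pi/2} x) = ennreal (F x) * indicator {0..pi/2} x"
      using AE_lborel_singleton[of 0] AE_lborel_singleton[of "pi/2"]
    proof (eventually_elim)
      case (elim x)
      show ?case
      proof (cases "x \<in> {0..pi/2}")
        case True
        then have "0 < x" "x < pi/2" using elim by auto
        then have "h (eta w u x) * g' x = F x"
          unfolding h_def g'_def F_def using subst_pt[OF wn wu ua] by blast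
        then show ?thesis using True by simp
      qed simp
    qed
  qed
  then have N2: "(\<integral>\<^sup>+x. ennreal (h x * indicator {w..u} x) \<partial>lborel) = ennreal (JJ \<nu> a w u)"
    using sub N1 unfolding e0 e1 by simp
  have h0: "\<And>x. 0 \<le> h x * indicator {w..u} x"
    unfolding h_def using wn ua by (auto simp: indicator_def intro!: divide_nonneg_nonneg mult_nonneg_nonneg)
  have H: "((\<lambda>x. h x * indicator {w..u} x) has_integral JJ \<nu> a w u) UNIV"
    by (rule nn_integral_has_integral[OF _ h0 N2 JJ0]) (use Mh in measurable)
  have eq: "(\<lambda>x. h x * indicator {w..u} x) = (\<lambda>x. if x \<in> {w..u} then h x else 0)"
    by (auto simp: indicator_def)
  have "((\<lambda>x. if x \<in> {w..u} then h x else 0) has_integral JJ \<nu> a w u) UNIV"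
    using H unfolding eq .
  then have "(h has_integral JJ \<nu> a w u) {w..u}" by (simp only: has_integral_restrict_UNIV)
  then show ?thesis unfolding Ifun_def h_def by (rule integral_unique)
qed

lemma f1_lb:
  assumes "-\<nu> < e" "e < a"
  shows "1 / (a + \<nu>) \<le> f1 \<nu> a e"
proof -
  have p: "0 < e + \<nu>" "e + \<nu> \<le> a + \<nu>" and q: "0 < a - e" "a - e \<le> a + \<nu>" using assms by auto
  have s1: "sqrt (e + \<nu>) \<le> sqrt (a + \<nu>)" "sqrt (a - e) \<le> sqrt (a + \<nu>)" using p q by auto
  have D: "sqrt (e + \<nu>) * ((a - e) * sqrt (a - e)) \<le> sqrt (a + \<nu>) * ((a + \<nu>) * sqrt (a + \<nu>))"
    using s1 p q by (intro mult_mono) auto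
  have DA: "sqrt (a + \<nu>) * ((a + \<nu>) * sqrt (a + \<nu>)) = (a + \<nu>) * (a + \<nu>)"
    using p by (simp add: algebra_simps flip: mult.assoc)
  have Dp: "0 < sqrt (e + \<nu>) * ((a - e) * sqrt (a - e))" using p q by auto
  have "(a + \<nu>) / ((a + \<nu>) * (a + \<nu>)) \<le> (a + \<nu>) / (sqrt (e + \<nu>) * ((a - e) * sqrt (a - e)))"
    using D DA Dp p by (intro divide_left_mono) auto
  then show ?thesis unfolding f1_def using p by simp
qed

lemma fF_lb:
  assumes "w \<le> e" "-\<nu> < w" "e < a"
  shows "2 * sqrt (w + \<nu>) / sqrt (a + \<nu>) \<le> fF \<nu> a e"
  unfolding fF_def using assms by (intro frac_le) auto

lemma integral_lb_sub:
  fixes \<phi> :: "real \<Rightarrow> real"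
  assumes c: "continuous_on {0..pi/2} \<phi>" and nn: "\<And>t. t \<in> {0..pi/2} \<Longrightarrow> 0 \<le> \<phi> t"
    and cd: "0 \<le> c" "c \<le> d" "d \<le> pi/2" and m: "\<And>t. t \<in> {c..d} \<Longrightarrow> m \<le> \<phi> t"
  shows "m * (d - c) \<le> integral {0..pi/2} \<phi>"
proof -
  have sub: "{c..d} \<subseteq> {0..pi/2}" using cd by auto
  have i1: "\<phi> integrable_on {c..d}" by (rule integrable_continuous_interval[OF continuous_on_subset[OF c sub]])
  have i2: "\<phi> integrable_on {0..pi/2}" by (rule integrable_continuous_interval[OF c])
  have "m * (d - c) = integral {c..d} (\<lambda>_. m)" using cd by simp
  also have "\<dots> \<le> integral {c..d} \<phi>" using m i1 by (intro integral_le) auto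
  also have "\<dots> \<le> integral {0..pi/2} \<phi>" using nn by (intro integral_subset_le sub i1 i2) auto
  finally show ?thesis .
qed

lemma cont_eta_t:
  assumes cf: "continuous_on {-\<nu><..<a} f" and "-\<nu> < w" "w < a" "-\<nu> < u" "u < a"
    and cg: "continuous_on UNIV (g :: real \<Rightarrow> real)"
  shows "continuous_on {0..pi/2} (\<lambda>t. f (eta w u t) * g t)"
proof -
  have ce: "continuous_on {0..pi/2} (\<lambda>t. eta w u t)"
    unfolding eta_def by (intro continuous_intros)
  have im: "(\<lambda>t. eta w u t) ` {0..pi/2} \<subseteq> {-\<nu><..<a}"
    using eta_in[of \<nu> w a u] assms by auto
  show ?thesis
    by (rule continuous_on_mult[OF continuous_on_compose2[OF cf ce im]
          continuous_on_subset[OF cg]]) auto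
qed

lemma sin_cos_lb:
  assumes "t \<in> {pi/6..pi/3}"
  shows "1/4 \<le> (sin t)\<^sup>2" "1/4 \<le> (cos t)\<^sup>2"
proof -
  have "sin (pi/6) \<le> sin t" using assms by (intro sin_monotone_2pi_le) auto
  then have s: "1/2 \<le> sin t" by (simp add: sin_30)
  have "cos (pi/3) \<le> cos t" using assms by (intro cos_monotone_0_pi_le) auto
  then have c: "1/2 \<le> cos t" by (simp add: cos_60)
  have "(1/2)\<^sup>2 \<le> (sin t)\<^sup>2" using s by (intro power_mono) auto
  then show "1/4 \<le> (sin t)\<^sup>2" by (simp add: power2_eq_square)
  have "(1/2)\<^sup>2 \<le> (cos t)\<^sup>2" using c by (intro power_mono) auto
  then show "1/4 \<le> (cos t)\<^sup>2" by (simp add: power2_eq_square)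
qed

lemma f1_pos: "-\<nu> < e \<Longrightarrow> e < a \<Longrightarrow> 0 < f1 \<nu> a e"
  unfolding f1_def by auto

lemma JJ_pos:
  assumes "-\<nu> < w" "w < u" "u < a"
  shows "0 < JJ \<nu> a w u"
proof -
  have e: "-\<nu> < eta w u t \<and> eta w u t < a" "w \<le> eta w u t" for t
    using eta_in[of \<nu> w a u t] eta_between[of w u t] assms by auto
  have c: "continuous_on {0..pi/2} (\<lambda>t. fF \<nu> a (eta w u t))"
    using cont_eta_t[OF cont_fF, of \<nu> w a u "\<lambda>t. 1"] assms by simp
  have "2 * sqrt (w + \<nu>) / sqrt (a + \<nu>) * (pi/2 - 0) \<le> JJ \<nu> a w u"
    unfolding JJ_def
  proof (rule integral_lb_sub[OF c])
    fix t show "0 \<le> fF \<nu> a (eta w u t)" using e[of t] unfolding fF_def by auto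
    show "2 * sqrt (w + \<nu>) / sqrt (a + \<nu>) \<le> fF \<nu> a (eta w u t)"
      using e[of t] assms by (intro fF_lb) auto
  qed auto
  moreover have "0 < 2 * sqrt (w + \<nu>) / sqrt (a + \<nu>) * (pi/2 - 0)" using assms by auto
  ultimately show ?thesis by linarith
qed

lemma Ju_pos:
  assumes "-\<nu> < w" "w < a" "-\<nu> < u" "u < a"
  shows "0 < Ju \<nu> a w u"
proof -
  have e: "-\<nu> < eta w u t \<and> eta w u t < a" for t
    using eta_in[of \<nu> w a u t] assms by auto
  have c: "continuous_on {0..pi/2} (\<lambda>t. f1 \<nu> a (eta w u t) * (sin t)\<^sup>2)"
    using cont_eta_t[OF cont_f1, of \<nu> w a u "\<lambda>t. (sin t)\<^sup>2"] assms by (simp add: continuous_intros)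
  have "(1 / (a + \<nu>) * (1/4)) * (pi/3 - pi/6) \<le> Ju \<nu> a w u"
    unfolding Ju_def
  proof (rule integral_lb_sub[OF c])
    fix t show "0 \<le> f1 \<nu> a (eta w u t) * (sin t)\<^sup>2" using e[of t] f1_pos[of \<nu> "eta w u t" a] by (intro mult_nonneg_nonneg) auto
    assume t: "t \<in> {pi/6..pi/3}"
    show "1 / (a + \<nu>) * (1/4) \<le> f1 \<nu> a (eta w u t) * (sin t)\<^sup>2"
      using e[of t] assms sin_cos_lb[OF t] f1_lb[of \<nu> "eta w u t" a] f1_pos[of \<nu> "eta w u t" a] by (intro mult_mono) auto
  qed auto
  moreover have "0 < (1 / (a + \<nu>) * (1/4)) * (pi/3 - pi/6)" using assms by auto
  ultimately show ?thesis by linarith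
qed

lemma Jw_pos:
  assumes "-\<nu> < w" "w < a" "-\<nu> < u" "u < a"
  shows "0 < Jw \<nu> a w u"
proof -
  have e: "-\<nu> < eta w u t \<and> eta w u t < a" for t
    using eta_in[of \<nu> w a u t] assms by auto
  have c: "continuous_on {0..pi/2} (\<lambda>t. f1 \<nu> a (eta w u t) * (cos t)\<^sup>2)"
    using cont_eta_t[OF cont_f1, of \<nu> w a u "\<lambda>t. (cos t)\<^sup>2"] assms by (simp add: continuous_intros)
  have "(1 / (a + \<nu>) * (1/4)) * (pi/3 - pi/6) \<le> Jw \<nu> a w u"
    unfolding Jw_def
  proof (rule integral_lb_sub[OF c])
    fix t show "0 \<le> f1 \<nu> a (eta w u t) * (cos t)\<^sup>2" using e[of t] f1_pos[of \<nu> "eta w u t" a] by (intro mult_nonneg_nonneg) auto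
    assume t: "t \<in> {pi/6..pi/3}"
    show "1 / (a + \<nu>) * (1/4) \<le> f1 \<nu> a (eta w u t) * (cos t)\<^sup>2"
      using e[of t] assms sin_cos_lb[OF t] f1_lb[of \<nu> "eta w u t" a] f1_pos[of \<nu> "eta w u t" a] by (intro mult_mono) auto
  qed auto
  moreover have "0 < (1 / (a + \<nu>) * (1/4)) * (pi/3 - pi/6)" using assms by auto
  ultimately show ?thesis by linarith
qed

lemma lam2_eq:
  assumes "-\<nu> < b" "b < u" "u < a"
  shows "lam2 \<nu> a u b = a + u + b + 2 * \<nu> - JJ \<nu> a b u / Ju \<nu> a b u"
proof -
  have "((\<lambda>s. Ifun \<nu> a s b) has_field_derivative Ju \<nu> a b u) (at u)"
  proof (rule has_field_derivative_transform_within_open[OF JJ_du, where S="{b<..<a}"])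
    fix x assume "x \<in> {b<..<a}" then show "JJ \<nu> a b x = Ifun \<nu> a x b"
      using Ifun_JJ[of \<nu> b x a] assms by auto
  qed (use assms in auto)
  then have "deriv (\<lambda>s. Ifun \<nu> a s b) u = Ju \<nu> a b u" by (rule DERIV_imp_deriv)
  then show ?thesis unfolding lam2_def using assms Ifun_JJ[of \<nu> b u a] by auto
qed

lemma lam3_eq:
  assumes "-\<nu> < b" "b < u" "u < a"
  shows "lam3 \<nu> a u b = a + u + b + 2 * \<nu> - JJ \<nu> a b u / Jw \<nu> a b u"
proof -
  have "((\<lambda>s. Ifun \<nu> a u s) has_field_derivative Jw \<nu> a b u) (at b)"
  proof (rule has_field_derivative_transform_within_open[OF JJ_dw, where S="{-\<nu><..<u}"])
    fix x assume "x \<in> {-\<nu><..<u}" then show "JJ \<nu> a x u = Ifun \<nu> a u x"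
      using Ifun_JJ[of \<nu> x u a] assms by auto
  qed (use assms in auto)
  then have "deriv (\<lambda>s. Ifun \<nu> a u s) b = Jw \<nu> a b u" by (rule DERIV_imp_deriv)
  then show ?thesis unfolding lam3_def using assms Ifun_JJ[of \<nu> b u a] by auto
qed

lemma ibp:
  assumes w: "-\<nu> < w" "w < a" and u: "-\<nu> < u" "u < a"
  shows "Ju \<nu> a w u - Jw \<nu> a w u = 2 * (u - w) * Jwu \<nu> a w u"
proof -
  define P where "P = (\<lambda>t. f1 \<nu> a (eta w u t) * (sin t * cos t))"
  define P' where "P' = (\<lambda>t. 2 * (u - w) * (f2 \<nu> a (eta w u t) * ((sin t)\<^sup>2 * (cos t)\<^sup>2))
      + f1 \<nu> a (eta w u t) * (cos t)\<^sup>2 - f1 \<nu> a (eta w u t) * (sin t)\<^sup>2)"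
  have e: "-\<nu> < eta w u t" "eta w u t < a" for t using eta_in[of \<nu> w a u t] w u by auto
  have deta: "((\<lambda>t. eta w u t) has_real_derivative (u - w) * (2 * sin t * cos t)) (at t)" for t
    unfolding eta_def by (auto intro!: derivative_eq_intros simp: power2_eq_square)
  have dP: "(P has_real_derivative P' t) (at t)" for t
  proof -
    have d1: "((\<lambda>t. f1 \<nu> a (eta w u t)) has_real_derivative f2 \<nu> a (eta w u t) * ((u - w) * (2 * sin t * cos t))) (at t)"
      by (rule DERIV_chain2[OF f1_deriv deta]) (use e in auto)
    have "(P has_real_derivative f2 \<nu> a (eta w u t) * ((u - w) * (2 * sin t * cos t)) * (sin t * cos t)
       + f1 \<nu> a (eta w u t) * (cos t * cos t - sin t * sin t)) (at t)"
      unfolding P_def by (auto intro!: derivative_eq_intros d1)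
    moreover have "f2 \<nu> a (eta w u t) * ((u - w) * (2 * sin t * cos t)) * (sin t * cos t)
       + f1 \<nu> a (eta w u t) * (cos t * cos t - sin t * sin t) = P' t"
      unfolding P'_def by (simp add: power2_eq_square algebra_simps)
    ultimately show ?thesis by simp
  qed
  have "(P' has_integral P (pi/2) - P 0) {0..pi/2}"
    by (rule fundamental_theorem_of_calculus)
      (auto simp: has_real_derivative_iff_has_vector_derivative[symmetric] intro: has_field_derivative_at_within[OF dP])
  then have I0: "(P' has_integral 0) {0..pi/2}" unfolding P_def by simp
  have c2: "continuous_on {0..pi/2} (\<lambda>t. f2 \<nu> a (eta w u t) * ((sin t)\<^sup>2 * (cos t)\<^sup>2))"
    using cont_eta_t[OF cont_f2, of \<nu> w a u "\<lambda>t. (sin t)\<^sup>2 * (cos t)\<^sup>2"] w u by (simp add: continuous_intros)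
  have cs: "continuous_on {0..pi/2} (\<lambda>t. f1 \<nu> a (eta w u t) * (sin t)\<^sup>2)"
    using cont_eta_t[OF cont_f1, of \<nu> w a u "\<lambda>t. (sin t)\<^sup>2"] w u by (simp add: continuous_intros)
  have cc: "continuous_on {0..pi/2} (\<lambda>t. f1 \<nu> a (eta w u t) * (cos t)\<^sup>2)"
    using cont_eta_t[OF cont_f1, of \<nu> w a u "\<lambda>t. (cos t)\<^sup>2"] w u by (simp add: continuous_intros)
  have h2: "((\<lambda>t. f2 \<nu> a (eta w u t) * ((sin t)\<^sup>2 * (cos t)\<^sup>2)) has_integral Jwu \<nu> a w u) {0..pi/2}"
    unfolding Jwu_def by (intro integrable_integral integrable_continuous_interval c2)
  have hs: "((\<lambda>t. f1 \<nu> a (eta w u t) * (sin t)\<^sup>2) has_integral Ju \<nu> a w u) {0..pi/2}"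
    unfolding Ju_def by (intro integrable_integral integrable_continuous_interval cs)
  have hc: "((\<lambda>t. f1 \<nu> a (eta w u t) * (cos t)\<^sup>2) has_integral Jw \<nu> a w u) {0..pi/2}"
    unfolding Jw_def by (intro integrable_integral integrable_continuous_interval cc)
  have "(P' has_integral 2 * (u - w) * Jwu \<nu> a w u + Jw \<nu> a w u - Ju \<nu> a w u) {0..pi/2}"
    unfolding P'_def by (intro has_integral_diff has_integral_add has_integral_mult_right h2 hs hc)
  with I0 have "2 * (u - w) * Jwu \<nu> a w u + Jw \<nu> a w u - Ju \<nu> a w u = 0"
    using has_integral_unique by blast
  then show ?thesis by linarith
qed

lemma f2_sign:
  assumes "-\<nu> < e" "e < a"
  shows "0 \<le> f2 \<nu> a e * (e - ((a + \<nu>)/4 - \<nu>))"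
    and "e \<le> (a + \<nu>)/4 - \<nu> \<Longrightarrow> f2 \<nu> a e \<le> 0"
proof -
  define D where "D = 2 * ((e + \<nu>) * sqrt (e + \<nu>)) * ((a - e)\<^sup>2 * sqrt (a - e))"
  have D: "D > 0" unfolding D_def using assms by auto
  have A: "a + \<nu> > 0" using assms by auto
  have f: "f2 \<nu> a e = 4 * (a + \<nu>) * (e - ((a + \<nu>)/4 - \<nu>)) / D"
  proof -
    have n: "(a + \<nu>) * (4 * (e + \<nu>) - (a + \<nu>)) = 4 * (a + \<nu>) * (e - ((a + \<nu>)/4 - \<nu>))"
      by (simp add: field_simps)
    show ?thesis unfolding f2_def D_def n ..
  qed
  show "0 \<le> f2 \<nu> a e * (e - ((a + \<nu>)/4 - \<nu>))"
    unfolding f using D A by (simp add: mult.assoc zero_le_mult_iff)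
  show "f2 \<nu> a e \<le> 0" if "e \<le> (a + \<nu>)/4 - \<nu>"
    unfolding f using D A that by (intro divide_nonpos_pos mult_nonneg_nonpos) auto
qed

lemma key:
  assumes w: "-\<nu> < w" "w < u" and u: "u < a" and w4: "w + \<nu> < (a + \<nu>)/4"
    and J: "0 < Jwu \<nu> a w u"
  shows "0 < Juu \<nu> a w u"
proof -
  define c0 where "c0 = (a + \<nu>)/4 - \<nu>"
  have wa: "w < a" "-\<nu> < u" using w u by auto
  have e: "-\<nu> < eta w u t" "eta w u t < a" for t using eta_in[of \<nu> w a u t] w u by auto
  have c2: "continuous_on {0..pi/2} (\<lambda>t. f2 \<nu> a (eta w u t) * ((sin t)\<^sup>2 * (cos t)\<^sup>2))"
    using cont_eta_t[OF cont_f2, of \<nu> w a u "\<lambda>t. (sin t)\<^sup>2 * (cos t)\<^sup>2"] w u wa by (simp add: continuous_intros)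
  have c4: "continuous_on {0..pi/2} (\<lambda>t. f2 \<nu> a (eta w u t) * ((sin t)\<^sup>2 * (sin t)\<^sup>2))"
    using cont_eta_t[OF cont_f2, of \<nu> w a u "\<lambda>t. (sin t)\<^sup>2 * (sin t)\<^sup>2"] w u wa by (simp add: continuous_intros)
  have h2: "((\<lambda>t. f2 \<nu> a (eta w u t) * ((sin t)\<^sup>2 * (cos t)\<^sup>2)) has_integral Jwu \<nu> a w u) {0..pi/2}"
    unfolding Jwu_def by (intro integrable_integral integrable_continuous_interval c2)
  have h4: "((\<lambda>t. f2 \<nu> a (eta w u t) * ((sin t)\<^sup>2 * (sin t)\<^sup>2)) has_integral Juu \<nu> a w u) {0..pi/2}"
    unfolding Juu_def by (intro integrable_integral integrable_continuous_interval c4)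
  have uc: "c0 < u"
  proof (rule ccontr)
    assume "\<not> c0 < u"
    then have "eta w u t \<le> c0" for t using eta_between[of w u t] w by auto
    then have "f2 \<nu> a (eta w u t) \<le> 0" for t using f2_sign(2)[OF e] unfolding c0_def by blast
    then have "Jwu \<nu> a w u \<le> 0"
      using has_integral_le[OF h2 has_integral_0] by (simp add: mult_nonpos_nonneg)
    then show False using J by simp
  qed
  have "((\<lambda>t. (w - c0) * (f2 \<nu> a (eta w u t) * ((sin t)\<^sup>2 * (cos t)\<^sup>2))
           + (u - c0) * (f2 \<nu> a (eta w u t) * ((sin t)\<^sup>2 * (sin t)\<^sup>2)))
        has_integral (w - c0) * Jwu \<nu> a w u + (u - c0) * Juu \<nu> a w u) {0..pi/2}"
    by (intro has_integral_add has_integral_mult_right h2 h4)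
  moreover have "0 \<le> (w - c0) * (f2 \<nu> a (eta w u t) * ((sin t)\<^sup>2 * (cos t)\<^sup>2))
           + (u - c0) * (f2 \<nu> a (eta w u t) * ((sin t)\<^sup>2 * (sin t)\<^sup>2))" for t
  proof -
    have "(w - c0) * (f2 \<nu> a (eta w u t) * ((sin t)\<^sup>2 * (cos t)\<^sup>2))
           + (u - c0) * (f2 \<nu> a (eta w u t) * ((sin t)\<^sup>2 * (sin t)\<^sup>2))
          = (f2 \<nu> a (eta w u t) * (eta w u t - c0)) * (sin t)\<^sup>2"
      unfolding eta_def cos_squared_eq by (simp add: algebra_simps)
    also have "\<dots> \<ge> 0" using f2_sign(1)[OF e, of t] unfolding c0_def by simp
    finally show ?thesis by simp
  qed
  ultimately have "0 \<le> (w - c0) * Jwu \<nu> a w u + (u - c0) * Juu \<nu> a w u"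
    by (rule has_integral_nonneg)
  moreover have "(w - c0) * Jwu \<nu> a w u < 0"
    using J w4 unfolding c0_def by (intro mult_neg_pos) (auto simp: field_simps)
  ultimately have "0 < (u - c0) * Juu \<nu> a w u" by linarith
  then show ?thesis using uc by (simp add: zero_less_mult_iff)
qed

lemma E1:
  assumes w: "-\<nu> < w" "w < u" and u: "u < a"
  shows "Jw \<nu> a w u \<le> (a + \<nu>) / (2 * (w + \<nu>) * (u - w)) * JJ \<nu> a w u"
proof -
  define K where "K = (a + \<nu>) / (2 * (w + \<nu>) * (u - w))"
  have wa: "w < a" "-\<nu> < u" using w u by auto
  have e: "-\<nu> < eta w u t" "eta w u t < a" for t using eta_in[of \<nu> w a u t] w u by auto
  have cc: "continuous_on {0..pi/2} (\<lambda>t. f1 \<nu> a (eta w u t) * (cos t)\<^sup>2)"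
    using cont_eta_t[OF cont_f1, of \<nu> w a u "\<lambda>t. (cos t)\<^sup>2"] w u wa by (simp add: continuous_intros)
  have cF: "continuous_on {0..pi/2} (\<lambda>t. fF \<nu> a (eta w u t))"
    using cont_eta_t[OF cont_fF, of \<nu> w a u "\<lambda>t. 1"] w u wa by simp
  have pt: "f1 \<nu> a (eta w u t) * (cos t)\<^sup>2 \<le> K * fF \<nu> a (eta w u t)" for t
  proof -
    define e where "e = eta w u t"
    define c where "c = (cos t)\<^sup>2"
    have c0: "0 \<le> c" unfolding c_def by simp
    have p: "w + \<nu> \<le> e + \<nu>" using eta_between[of w u t] w unfolding e_def by auto
    have qe: "a - e = (a - u) + (u - w) * c" unfolding e_def eta_def c_def cos_squared_eq by algebra
    have q: "(u - w) * c \<le> a - e" using qe u by auto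
    have pp: "0 < e + \<nu>" "0 < a - e" using e[of t] unfolding e_def by auto
    have key: "c * ((w + \<nu>) * (u - w)) \<le> (e + \<nu>) * (a - e)"
    proof -
      have "c * ((w + \<nu>) * (u - w)) = (w + \<nu>) * ((u - w) * c)" by simp
      also have "\<dots> \<le> (e + \<nu>) * (a - e)" using p q w c0 by (intro mult_mono) auto
      finally show ?thesis .
    qed
    obtain P Q where P: "P = sqrt (e + \<nu>)" and Q: "Q = sqrt (a - e)" by auto
    have PQ: "P > 0" "Q > 0" "P * P = e + \<nu>" "Q * Q = a - e" using pp P Q by auto
    have "f1 \<nu> a e * c = (a + \<nu>) * c / (P * (Q * Q * Q))"
    proof -
      have "(a - e) * sqrt (a - e) = Q * Q * Q" unfolding Q using pp by simp
      then show ?thesis unfolding f1_def P[symmetric] by simp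
    qed
    also have "\<dots> \<le> K * fF \<nu> a e"
    proof -
      have k2: "c * ((w + \<nu>) * (u - w)) \<le> (P * P) * (Q * Q)" using key PQ by simp
      have A: "0 < a + \<nu>" "0 < w + \<nu>" "0 < u - w" using w u by auto
      have "(a + \<nu>) * c / (P * (Q * Q * Q)) =
            (a + \<nu>) * (c * ((w + \<nu>) * (u - w))) / (P * (Q * Q * Q) * ((w + \<nu>) * (u - w)))"
        using A PQ by (subst mult.assoc[symmetric], subst mult_divide_mult_cancel_right) auto
      also have "\<dots> \<le> (a + \<nu>) * ((P * P) * (Q * Q)) / (P * (Q * Q * Q) * ((w + \<nu>) * (u - w)))"
        using A PQ k2 pp by (intro divide_right_mono mult_left_mono) (auto intro!: mult_nonneg_nonneg)
      also have "\<dots> = K * fF \<nu> a e"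
      proof -
        have X: "(w + \<nu>) * (u - w) > 0" using A by auto
        have g: "\<And>X::real. X > 0 \<Longrightarrow> (a + \<nu>) * ((P * P) * (Q * Q)) / (P * (Q * Q * Q) * X) = (a + \<nu>) / (2 * X) * (2 * P / Q)"
          using PQ(1,2) by (simp add: field_simps)
        show ?thesis unfolding K_def fF_def P[symmetric] Q[symmetric] mult.assoc[of 2]
          by (rule g[OF X])
      qed
      finally show ?thesis .
    qed
    finally show ?thesis unfolding e_def c_def .
  qed
  have "Jw \<nu> a w u \<le> integral {0..pi/2} (\<lambda>t. K * fF \<nu> a (eta w u t))"
    unfolding Jw_def using pt
    by (intro integral_le integrable_continuous_interval cc continuous_intros cF) auto
  also have "\<dots> = K * JJ \<nu> a w u" unfolding JJ_def by simp
  finally show ?thesis unfolding K_def .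
qed

lemma E2:
  assumes w: "-\<nu> < w" "w < u" and u: "u < a"
  shows "JJ \<nu> a w u \<le> pi * sqrt (a + \<nu>) / sqrt (a - u)"
proof -
  have wa: "w < a" "-\<nu> < u" using w u by auto
  have e: "-\<nu> < eta w u t" "eta w u t < a" "eta w u t \<le> u" for t
    using eta_in[of \<nu> w a u t] eta_between[of w u t] w u by auto
  have cF: "continuous_on {0..pi/2} (\<lambda>t. fF \<nu> a (eta w u t))"
    using cont_eta_t[OF cont_fF, of \<nu> w a u "\<lambda>t. 1"] w u wa by simp
  have pt: "fF \<nu> a (eta w u t) \<le> 2 * sqrt (a + \<nu>) / sqrt (a - u)" for t
    unfolding fF_def using e[of t] u by (intro frac_le) auto
  have "JJ \<nu> a w u \<le> integral {0..pi/2} (\<lambda>t. 2 * sqrt (a + \<nu>) / sqrt (a - u))"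
    unfolding JJ_def using pt by (intro integral_le integrable_continuous_interval cF) auto
  also have "\<dots> = pi * sqrt (a + \<nu>) / sqrt (a - u)" by simp
  finally show ?thesis .
qed

lemma alg2:
  fixes r l sA s2 :: real
  assumes "r > 0" "l > 0" "sA > 0" "s2 > 0"
  shows "(pi * sA / r) / ((sA * sA) / (sA * (2 * (r * r) * (s2 * r))) * (1/2) * (r / l)) = 4 * pi * s2 * (r * l)"
  using assms by (simp add: field_simps)

lemma E3:
  assumes w: "-\<nu> < w" "w < u" and u: "u < a" and sm: "a - u \<le> (u - w) / 2"
  shows "(a + \<nu>) / (sqrt (a + \<nu>) * (2 * (a - u) * sqrt (2 * (a - u)))) * (1/2) * sqrt ((a - u) / (u - w))
     \<le> Ju \<nu> a w u"
proof -
  define \<epsilon> where "\<epsilon> = a - u"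
  define L where "L = u - w"
  define \<delta> where "\<delta> = sqrt (\<epsilon> / L)"
  define m1 where "m1 = (a + \<nu>) / (sqrt (a + \<nu>) * (2 * \<epsilon> * sqrt (2 * \<epsilon>)))"
  have ep: "\<epsilon> > 0" "L > 0" "\<epsilon> \<le> L / 2" using w u sm unfolding \<epsilon>_def L_def by auto
  have wa: "w < a" "-\<nu> < u" using w u by auto
  have e: "-\<nu> < eta w u t" "eta w u t < a" for t
    using eta_in[of \<nu> w a u t] w u by auto
  have c: "continuous_on {0..pi/2} (\<lambda>t. f1 \<nu> a (eta w u t) * (sin t)\<^sup>2)"
    using cont_eta_t[OF cont_f1, of \<nu> w a u "\<lambda>t. (sin t)\<^sup>2"] w u wa by (simp add: continuous_intros)
  have d2: "\<delta>\<^sup>2 = \<epsilon> / L" unfolding \<delta>_def using ep by simp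
  have d0: "\<delta> \<ge> 0" unfolding \<delta>_def using ep by simp
  have d1: "\<delta> \<le> 1"
  proof -
    have "\<epsilon> / L \<le> 1" using ep by (simp add: divide_le_eq)
    then have "\<delta>\<^sup>2 \<le> 1\<^sup>2" using d2 by simp
    then show ?thesis by (rule power2_le_imp_le) simp
  qed
  have "(m1 * (1/2)) * (pi/2 - (pi/2 - \<delta>)) \<le> Ju \<nu> a w u"
    unfolding Ju_def
  proof (rule integral_lb_sub[OF c])
    fix t show "0 \<le> f1 \<nu> a (eta w u t) * (sin t)\<^sup>2" using e[of t] f1_pos[of \<nu> "eta w u t" a]
      by (intro mult_nonneg_nonneg) auto
    assume t: "t \<in> {pi/2 - \<delta>..pi/2}"
    have pi1: "1 < pi/2" using pi_gt3 by simp
    have ct0: "0 \<le> cos t" using t d1 pi1 by (intro cos_ge_zero) auto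
    have "cos t = sin (pi/2 - t)" by (simp add: cos_sin_eq)
    also have "\<dots> \<le> pi/2 - t" using t by (intro sin_x_le_x) auto
    also have "\<dots> \<le> \<delta>" using t by auto
    finally have "cos t \<le> \<delta>" .
    then have cc: "(cos t)\<^sup>2 \<le> \<epsilon> / L" unfolding d2[symmetric] using ct0 by (intro power_mono) auto
    have qe: "a - eta w u t = \<epsilon> + L * (cos t)\<^sup>2"
      unfolding eta_def \<epsilon>_def L_def cos_squared_eq by algebra
    have "L * (cos t)\<^sup>2 \<le> L * (\<epsilon> / L)" using cc ep by (intro mult_left_mono) auto
    then have q2: "a - eta w u t \<le> 2 * \<epsilon>" using qe ep by simp
    have q1: "\<epsilon> \<le> a - eta w u t" using qe ep by simp
    have p: "0 < eta w u t + \<nu>" "eta w u t + \<nu> \<le> a + \<nu>" using e[of t] by auto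
    have D: "sqrt (eta w u t + \<nu>) * ((a - eta w u t) * sqrt (a - eta w u t)) \<le> sqrt (a + \<nu>) * (2 * \<epsilon> * sqrt (2 * \<epsilon>))"
      using p q1 q2 ep by (intro mult_mono) auto
    have Dp: "0 < sqrt (eta w u t + \<nu>) * ((a - eta w u t) * sqrt (a - eta w u t))" using p q1 ep by auto
    have f1b: "m1 \<le> f1 \<nu> a (eta w u t)"
    proof -
      have Dp2: "0 < sqrt (a + \<nu>) * (2 * \<epsilon> * sqrt (2 * \<epsilon>))" using p ep by auto
      show ?thesis
        unfolding m1_def f1_def using D mult_pos_pos[OF Dp2 Dp] p by (intro divide_left_mono) auto
    qed
    have "\<epsilon> / L \<le> 1/2" using ep by (simp add: divide_le_eq)
    then have s2: "1/2 \<le> (sin t)\<^sup>2" using cc unfolding sin_squared_eq by linarith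
    have m10: "0 \<le> m1" unfolding m1_def using p ep by auto
    show "m1 * (1/2) \<le> f1 \<nu> a (eta w u t) * (sin t)\<^sup>2"
      using f1b s2 m10 by (intro mult_mono) auto
  qed (use d0 d1 pi_gt3 in auto)
  then show ?thesis unfolding m1_def \<delta>_def \<epsilon>_def L_def by simp
qed

lemma E23:
  assumes w: "-\<nu> < w" "w < u" and u: "u < a" and sm: "a - u \<le> (u - w) / 2"
  shows "JJ \<nu> a w u / Ju \<nu> a w u \<le> 4 * pi * sqrt 2 * (sqrt (a - u) * sqrt (u - w))"
proof -
  define r where "r = sqrt (a - u)"
  define l where "l = sqrt (u - w)"
  define sA where "sA = sqrt (a + \<nu>)"
  have pos: "r > 0" "l > 0" "sA > 0" "sqrt 2 > (0::real)" using w u unfolding r_def l_def sA_def by auto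
  have JJ0: "0 \<le> JJ \<nu> a w u" using JJ_pos[OF w u] by simp
  have lb: "(sA * sA) / (sA * (2 * (r * r) * (sqrt 2 * r))) * (1/2) * (r / l) \<le> Ju \<nu> a w u"
  proof -
    have "sqrt (2 * (a - u)) = sqrt 2 * r" unfolding r_def by (rule real_sqrt_mult)
    moreover have "(a + \<nu>) = sA * sA" "a - u = r * r"
      "sqrt ((a - u) / (u - w)) = r / l"
      using w u unfolding sA_def r_def l_def by (auto simp: real_sqrt_mult real_sqrt_divide)
    ultimately show ?thesis using E3[OF w u sm] unfolding sA_def[symmetric] by simp
  qed
  have lbp: "0 < (sA * sA) / (sA * (2 * (r * r) * (sqrt 2 * r))) * (1/2) * (r / l)" using pos by simp
  have "JJ \<nu> a w u / Ju \<nu> a w u \<le> (pi * sA / r) / ((sA * sA) / (sA * (2 * (r * r) * (sqrt 2 * r))) * (1/2) * (r / l))"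
    using E2[OF w u] JJ0 lb lbp pos unfolding sA_def[symmetric] r_def[symmetric]
    by (intro frac_le) auto
  also have "\<dots> = 4 * pi * sqrt 2 * (r * l)" by (rule alg2[OF pos(1,2,3,4)])
  finally show ?thesis unfolding r_def l_def .
qed

lemma L2_deriv:
  assumes nb: "-\<nu> < b" and u: "b < u" "u < a"
  shows "((\<lambda>u. lam2 \<nu> a u b) has_real_derivative
      JJ \<nu> a b u * Juu \<nu> a b u / (Ju \<nu> a b u * Ju \<nu> a b u)) (at u)"
proof -
  have ba: "b < a" "-\<nu> < u" using nb u by auto
  have J0: "Ju \<nu> a b u \<noteq> 0" using Ju_pos[of \<nu> b a u] nb u ba by auto
  have d1: "((\<lambda>u. a + u + b + 2 * \<nu>) has_real_derivative 1) (at u)"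
    by (auto intro!: derivative_eq_intros)
  have d: "((\<lambda>u. a + u + b + 2 * \<nu> - JJ \<nu> a b u / Ju \<nu> a b u) has_real_derivative
      1 - (Ju \<nu> a b u * Ju \<nu> a b u - JJ \<nu> a b u * Juu \<nu> a b u) / (Ju \<nu> a b u * Ju \<nu> a b u)) (at u)"
    by (intro DERIV_diff d1 DERIV_divide JJ_du Ju_du J0) (use nb ba u in auto)
  have e: "1 - (Ju \<nu> a b u * Ju \<nu> a b u - JJ \<nu> a b u * Juu \<nu> a b u) / (Ju \<nu> a b u * Ju \<nu> a b u)
      = JJ \<nu> a b u * Juu \<nu> a b u / (Ju \<nu> a b u * Ju \<nu> a b u)"
    using J0 by (simp add: field_simps)
  show ?thesis
  proof (rule has_field_derivative_transform_within_open[OF d[unfolded e], where S="{b<..<a}"])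
    fix x assume "x \<in> {b<..<a}" then show "a + x + b + 2 * \<nu> - JJ \<nu> a b x / Ju \<nu> a b x = lam2 \<nu> a x b"
      using lam2_eq[OF nb] by auto
  qed (use u in auto)
qed

definition Dx where "Dx \<nu> a b u = JJ \<nu> a b u / Jw \<nu> a b u - JJ \<nu> a b u / Ju \<nu> a b u"

lemma Dx_eq:
  assumes nb: "-\<nu> < b" and u: "b < u" "u < a"
  shows "lam2 \<nu> a u b - lam3 \<nu> a u b = Dx \<nu> a b u"
  using lam2_eq[OF nb u] lam3_eq[OF nb u] unfolding Dx_def by simp

lemma Dx_cont:
  assumes nb: "-\<nu> < b" and u: "b < u" "u < a"
  shows "isCont (Dx \<nu> a b) u"
proof -
  have ba: "b < a" "-\<nu> < u" using nb u by auto
  have J0: "Ju \<nu> a b u \<noteq> 0" "Jw \<nu> a b u \<noteq> 0"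
    using Ju_pos[of \<nu> b a u] Jw_pos[of \<nu> b a u] nb u ba by auto
  have "((\<lambda>u. JJ \<nu> a b u / Jw \<nu> a b u - JJ \<nu> a b u / Ju \<nu> a b u) has_real_derivative
      (Ju \<nu> a b u * Jw \<nu> a b u - JJ \<nu> a b u * Jwu \<nu> a b u) / (Jw \<nu> a b u * Jw \<nu> a b u)
      - (Ju \<nu> a b u * Ju \<nu> a b u - JJ \<nu> a b u * Juu \<nu> a b u) / (Ju \<nu> a b u * Ju \<nu> a b u)) (at u)"
    by (intro DERIV_diff DERIV_divide JJ_du Ju_du Jw_du J0) (use nb ba u in auto)
  then have "isCont (\<lambda>u. JJ \<nu> a b u / Jw \<nu> a b u - JJ \<nu> a b u / Ju \<nu> a b u) u"
    by (rule DERIV_isCont)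
  then show ?thesis unfolding Dx_def[abs_def] .
qed

lemma lim_ratio:
  assumes nb: "-\<nu> < b" and ba: "b < a"
  shows "((\<lambda>u. JJ \<nu> a b u / Ju \<nu> a b u) \<longlongrightarrow> 0) (at_left a)"
proof (rule tendsto_sandwich[where f="\<lambda>_. 0" and h="\<lambda>u. 4 * pi * sqrt 2 * (sqrt (a - u) * sqrt (u - b))"])
  have ev: "eventually (\<lambda>u. u \<in> {(2*a+b)/3<..<a}) (at_left a)"
    using ba by (intro eventually_at_left_real) simp
  show "eventually (\<lambda>u. 0 \<le> JJ \<nu> a b u / Ju \<nu> a b u) (at_left a)"
    using ev
  proof (rule eventually_mono)
    fix u assume "u \<in> {(2*a+b)/3<..<a}"
    then have u: "b < u" "u < a" using ba by auto
    then show "0 \<le> JJ \<nu> a b u / Ju \<nu> a b u"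
      using JJ_pos[OF nb u] Ju_pos[of \<nu> b a u] nb ba by auto
  qed
  show "eventually (\<lambda>u. JJ \<nu> a b u / Ju \<nu> a b u \<le> 4 * pi * sqrt 2 * (sqrt (a - u) * sqrt (u - b))) (at_left a)"
    using ev
  proof (rule eventually_mono)
    fix u assume "u \<in> {(2*a+b)/3<..<a}"
    then have u: "b < u" "u < a" "a - u \<le> (u - b) / 2" using ba by auto
    then show "JJ \<nu> a b u / Ju \<nu> a b u \<le> 4 * pi * sqrt 2 * (sqrt (a - u) * sqrt (u - b))"
      using E23[OF nb u(1) u(2) u(3)] by simp
  qed
  have "((\<lambda>u. 4 * pi * sqrt 2 * (sqrt (a - u) * sqrt (u - b))) \<longlongrightarrow> 4 * pi * sqrt 2 * (sqrt (a - a) * sqrt (a - b))) (at_left a)"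
    by (intro tendsto_intros)
  then show "((\<lambda>u. 4 * pi * sqrt 2 * (sqrt (a - u) * sqrt (u - b))) \<longlongrightarrow> 0) (at_left a)" by simp
qed simp

lemma lam2_lim:
  assumes nb: "-\<nu> < b" and ba: "b < a"
  shows "((\<lambda>u. lam2 \<nu> a u b) \<longlongrightarrow> lam2 \<nu> a a b) (at_left a)"
proof -
  have "((\<lambda>u. a + u + b + 2 * \<nu> - JJ \<nu> a b u / Ju \<nu> a b u) \<longlongrightarrow> a + a + b + 2 * \<nu> - 0) (at_left a)"
    by (intro tendsto_intros lim_ratio[OF nb ba] tendsto_ident_at)
  moreover have "eventually (\<lambda>u. a + u + b + 2 * \<nu> - JJ \<nu> a b u / Ju \<nu> a b u = lam2 \<nu> a u b) (at_left a)"
    using eventually_at_left_real[OF ba] by eventually_elim (use lam2_eq[OF nb] in auto)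
  ultimately have "((\<lambda>u. lam2 \<nu> a u b) \<longlongrightarrow> a + a + b + 2 * \<nu> - 0) (at_left a)"
    using tendsto_cong by fastforce
  then show ?thesis unfolding lam2_def by simp
qed

lemma D_pos_near:
  assumes nb: "-\<nu> < b" and ba: "b < a"
  shows "eventually (\<lambda>u. 0 < Dx \<nu> a b u) (at_left a)"
proof -
  define C where "C = 4 * pi * sqrt 2"
  define R where "R = (\<lambda>u. 2 * (b + \<nu>) * (u - b) / (a + \<nu>) - C * (sqrt (a - u) * sqrt (u - b)))"
  have "(R \<longlongrightarrow> 2 * (b + \<nu>) * (a - b) / (a + \<nu>) - C * (sqrt (a - a) * sqrt (a - b))) (at_left a)"
    unfolding R_def by (intro tendsto_intros) (use nb ba in auto)
  moreover have "0 < 2 * (b + \<nu>) * (a - b) / (a + \<nu>) - C * (sqrt (a - a) * sqrt (a - b))"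
    using nb ba by simp
  ultimately have evR: "eventually (\<lambda>u. 0 < R u) (at_left a)"
    by (rule order_tendstoD)
  have ev: "eventually (\<lambda>u. u \<in> {(2*a+b)/3<..<a}) (at_left a)"
    using ba by (intro eventually_at_left_real) simp
  show ?thesis using evR ev
  proof eventually_elim
    case (elim u)
    then have u: "b < u" "u < a" "a - u \<le> (u - b) / 2" using ba by auto
    have JJp: "0 < JJ \<nu> a b u" using JJ_pos[OF nb u(1,2)] .
    have Jwp: "0 < Jw \<nu> a b u" using Jw_pos[of \<nu> b a u] nb u by auto
    define K where "K = (a + \<nu>) / (2 * (b + \<nu>) * (u - b))"
    have Kp: "K > 0" unfolding K_def using nb u by auto
    have "Jw \<nu> a b u \<le> K * JJ \<nu> a b u" using E1[OF nb u(1,2)] unfolding K_def .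
    then have "JJ \<nu> a b u / (K * JJ \<nu> a b u) \<le> JJ \<nu> a b u / Jw \<nu> a b u"
      using JJp Jwp Kp by (intro divide_left_mono) auto
    then have r1: "2 * (b + \<nu>) * (u - b) / (a + \<nu>) \<le> JJ \<nu> a b u / Jw \<nu> a b u"
      using JJp unfolding K_def by simp
    have r2: "JJ \<nu> a b u / Ju \<nu> a b u \<le> C * (sqrt (a - u) * sqrt (u - b))"
      using E23[OF nb u(1) u(2) u(3)] unfolding C_def by simp
    show ?case using elim(1) r1 r2 unfolding R_def Dx_def by linarith
  qed
qed

theorem lemma4p6:
  fixes \<nu> a b ustar :: real
  assumes "0 < b + \<nu>" and "b + \<nu> < (a + \<nu>) / 4"
    and "b < ustar" and "ustar < a"
    and "lam2 \<nu> a ustar b = lam3 \<nu> a ustar b"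
    and "\<And>u. b < u \<Longrightarrow> u < a \<Longrightarrow> lam2 \<nu> a u b = lam3 \<nu> a u b \<Longrightarrow> u = ustar"
  shows "strict_mono_on {ustar..a} (\<lambda>u. lam2 \<nu> a u b)
    \<and> bij_betw (\<lambda>u. lam2 \<nu> a u b) {ustar..a}
        {lam2 \<nu> a ustar b .. 2 * a + b + 2 * \<nu>}"
proof -
  have nb: "-\<nu> < b" using assms(1) by simp
  have ba: "b < a" using assms(3,4) by simp
  have b4: "b + \<nu> < (a + \<nu>) / 4" using assms(2) .
  have us: "b < ustar" "ustar < a" using assms(3,4) .
  define g where "g = (\<lambda>u. lam2 \<nu> a u b)"
  have ga: "g a = 2 * a + b + 2 * \<nu>" unfolding g_def lam2_def by simp
  have Dcont: "continuous_on {x..y} (Dx \<nu> a b)" if "b < x" "y < a" for x y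
    by (rule continuous_at_imp_continuous_on) (use that Dx_cont[OF nb] in auto)
  have Dpos: "0 < Dx \<nu> a b u" if u: "ustar < u" "u < a" for u
  proof (rule ccontr)
    assume neg: "\<not> 0 < Dx \<nu> a b u"
    have bu: "b < u" using u us by simp
    have "Dx \<nu> a b u \<noteq> 0"
    proof
      assume "Dx \<nu> a b u = 0"
      then have "lam2 \<nu> a u b = lam3 \<nu> a u b" using Dx_eq[OF nb bu u(2)] by simp
      then have "u = ustar" using assms(6)[OF bu u(2)] by simp
      then show False using u by simp
    qed
    with neg have Dn: "Dx \<nu> a b u < 0" by simp
    have "eventually (\<lambda>v. 0 < Dx \<nu> a b v \<and> v \<in> {ustar<..<a}) (at_left a)"
      using D_pos_near[OF nb ba] eventually_at_left_real[OF us(2)] by (rule eventually_conj)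
    then obtain u1 where u1: "0 < Dx \<nu> a b u1" "ustar < u1" "u1 < a"
      using eventually_happens[of _ "at_left a"] by fastforce
    have "\<exists>z. min u u1 \<le> z \<and> z \<le> max u u1 \<and> Dx \<nu> a b z = 0"
    proof (cases "u \<le> u1")
      case True
      have "\<exists>z. u \<le> z \<and> z \<le> u1 \<and> Dx \<nu> a b z = 0"
        using Dn u1 True Dcont[of u u1] bu by (intro IVT') auto
      then show ?thesis using True by auto
    next
      case False
      have "\<exists>z. u1 \<le> z \<and> z \<le> u \<and> Dx \<nu> a b z = 0"
        using Dn u1 False Dcont[of u1 u] u us by (intro IVT2') auto
      then show ?thesis using False by auto
    qed
    then obtain z where z: "min u u1 \<le> z" "z \<le> max u u1" "Dx \<nu> a b z = 0" by blast
    have zz: "ustar < z" "z < a" "b < z" using z u u1 us by auto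
    have "lam2 \<nu> a z b = lam3 \<nu> a z b" using Dx_eq[OF nb zz(3) zz(2)] z(3) by simp
    then have "z = ustar" using assms(6)[OF zz(3) zz(2)] by simp
    then show False using zz by simp
  qed
  have dpos: "0 < JJ \<nu> a b u * Juu \<nu> a b u / (Ju \<nu> a b u * Ju \<nu> a b u)" if u: "ustar < u" "u < a" for u
  proof -
    have bu: "b < u" using u us by simp
    have JJp: "0 < JJ \<nu> a b u" using JJ_pos[OF nb bu u(2)] .
    have Jup: "0 < Ju \<nu> a b u" using Ju_pos[of \<nu> b a u] nb bu u ba by auto
    have Jwp: "0 < Jw \<nu> a b u" using Jw_pos[of \<nu> b a u] nb bu u ba by auto
    have "JJ \<nu> a b u / Ju \<nu> a b u < JJ \<nu> a b u / Jw \<nu> a b u" using Dpos[OF u] unfolding Dx_def by simp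
    then have "Jw \<nu> a b u < Ju \<nu> a b u"
    proof (rule contrapos_pp)
      assume "\<not> Jw \<nu> a b u < Ju \<nu> a b u"
      then have "JJ \<nu> a b u / Jw \<nu> a b u \<le> JJ \<nu> a b u / Ju \<nu> a b u"
        using JJp Jup Jwp by (intro divide_left_mono) auto
      then show "\<not> JJ \<nu> a b u / Ju \<nu> a b u < JJ \<nu> a b u / Jw \<nu> a b u" by simp
    qed
    then have "0 < 2 * (u - b) * Jwu \<nu> a b u" using ibp[of \<nu> b a u] nb bu u ba by simp
    then have "0 < Jwu \<nu> a b u" using bu by (simp add: zero_less_mult_iff)
    then have "0 < Juu \<nu> a b u" by (rule key[OF nb bu u(2) b4])
    then show ?thesis using JJp Jup by simp
  qed
  have iscont: "isCont g x" if "b < x" "x < a" for x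
    unfolding g_def using L2_deriv[OF nb that] by (rule DERIV_isCont)
  have cont: "continuous_on {ustar..a} g"
  proof (rule continuous_on_IccI)
    have "(g \<longlongrightarrow> g ustar) (at ustar)" using iscont[OF us] unfolding isCont_def .
    then show "(g \<longlongrightarrow> g ustar) (at_right ustar)"
      by (rule tendsto_mono[rotated]) (simp add: at_le)
    show "(g \<longlongrightarrow> g a) (at_left a)" unfolding g_def by (rule lam2_lim[OF nb ba])
    fix x assume "ustar < x" "x < a"
    then show "(g \<longlongrightarrow> g x) (at x)" using iscont[of x] us unfolding isCont_def by simp
  qed (rule us(2))
  have smono: "strict_mono_on {ustar..a} g"
  proof (rule strict_mono_onI)
    fix x y assume xy: "x \<in> {ustar..a}" "y \<in> {ustar..a}" "x < y"
    show "g x < g y"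
    proof (rule DERIV_pos_imp_increasing_open[OF xy(3)])
      fix t assume "x < t" "t < y"
      then have t: "ustar < t" "t < a" "b < t" using xy us by auto
      show "\<exists>d. (g has_real_derivative d) (at t) \<and> 0 < d"
        using L2_deriv[OF nb t(3) t(2)] dpos[OF t(1,2)] unfolding g_def by blast
    next
      show "continuous_on {x..y} g" using xy by (intro continuous_on_subset[OF cont]) auto
    qed
  qed
  have bij: "bij_betw g {ustar..a} {g ustar .. 2 * a + b + 2 * \<nu>}"
    unfolding bij_betw_def
  proof
    show "inj_on g {ustar..a}" by (rule strict_mono_on_imp_inj_on[OF smono])
    show "g ` {ustar..a} = {g ustar..2 * a + b + 2 * \<nu>}"
    proof
      show "g ` {ustar..a} \<subseteq> {g ustar..2 * a + b + 2 * \<nu>}"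
      proof
        fix y assume "y \<in> g ` {ustar..a}"
        then obtain x where x: "x \<in> {ustar..a}" "y = g x" by auto
        have "g ustar \<le> g x" "g x \<le> g a"
          using x us by (auto intro!: strict_mono_on_leD[OF smono])
        then show "y \<in> {g ustar..2 * a + b + 2 * \<nu>}" using x ga by auto
      qed
      show "{g ustar..2 * a + b + 2 * \<nu>} \<subseteq> g ` {ustar..a}"
      proof
        fix y assume y: "y \<in> {g ustar..2 * a + b + 2 * \<nu>}"
        have "\<exists>x. ustar \<le> x \<and> x \<le> a \<and> g x = y"
          using y ga us cont by (intro IVT') auto
        then show "y \<in> g ` {ustar..a}" by force
      qed
    qed
  qed
  show ?thesis using smono bij unfolding g_def by simp
qed

end
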